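(* Let $\mathbb F$ have characteristic $0$, view $\mathbb F^k$ as an $\mathbb F$-algebra with coordinatewise multiplication, let $\mathbf a_1,\dots,\mathbf a_n\in\mathbb F^k$, $d\ge0$, and $D(\mathbf x)=(\mathbf 1+\mathbf a_1x_1+\dots+\mathbf a_nx_n)^d\in\mathbb F^k[\mathbf x]$, where $\mathbf 1$ is the all-ones vector. Then $D$ has a cone-closed basis.
   Context: For $D\in\mathbb F^k[\mathbf x]$, $\mathrm{lrsp}(D)$ is the span of its coefficient vectors. A set of monomials is cone-closed if it contains every submonomial ($\mathbf x^{\mathbf e'}$ with $\mathbf e'\le\mathbf e$ coordinatewise) of each element; $D$ has a cone-closed basis if there is a cone-closed set of monomials whose coefficient vectors form a basis of $\mathrm{lrsp}(D)$. *)

theory Defs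
  imports "HOL-Analysis.Analysis" "HOL-Library.Poly_Mapping"
begin

text \<open>Monomials are exponent vectors
  (nat =>0 nat); a polynomial maps each monomial to its coefficient vector.\<close>

type_synonym ('a, 'k) vpoly = "(nat \<Rightarrow>\<^sub>0 nat) \<Rightarrow>\<^sub>0 ('a ^ 'k)"

definition lrsp :: "('a::field, 'k::finite) vpoly \<Rightarrow> ('a ^ 'k) set" where
  "lrsp D = vec.span (range (Poly_Mapping.lookup D))"

definition cone_closed :: "(nat \<Rightarrow>\<^sub>0 nat) set \<Rightarrow> bool" where
  "cone_closed S \<longleftrightarrow> (\<forall>e\<in>S. \<forall>e'. (\<forall>i. Poly_Mapping.lookup e' i \<le> Poly_Mapping.lookup e i) \<longrightarrow> e' \<in> S)"

definition has_cone_closed_basis :: "('a::field, 'k::finite) vpoly \<Rightarrow> bool" where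
  "has_cone_closed_basis D \<longleftrightarrow>
     (\<exists>S. cone_closed S \<and> inj_on (Poly_Mapping.lookup D) S \<and> vec.independent (Poly_Mapping.lookup D ` S)
          \<and> vec.span (Poly_Mapping.lookup D ` S) = lrsp D)"

definition var_term :: "nat \<Rightarrow> 'a ^ 'k \<Rightarrow> ('a::field, 'k::finite) vpoly" where
  "var_term i c = Poly_Mapping.single (Poly_Mapping.single i 1) c"

end

theory Submission imports Defs begin

lemma pm_add_delta_iff:
  assumes "0 < Poly_Mapping.lookup e i"
  shows "e = l + Poly_Mapping.single i (1::nat) \<longleftrightarrow> l = e - Poly_Mapping.single i 1"
proof
  assume "e = l + Poly_Mapping.single i 1"
  then show "l = e - Poly_Mapping.single i 1"
    by (simp add: poly_mapping_eqI lookup_minus lookup_add)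
next
  assume h: "l = e - Poly_Mapping.single i 1"
  show "e = l + Poly_Mapping.single i 1"
  proof (rule poly_mapping_eqI)
    fix j show "Poly_Mapping.lookup e j = Poly_Mapping.lookup (l + Poly_Mapping.single i 1) j"
      using assms unfolding h lookup_add lookup_minus lookup_single by (auto simp: when_def)
  qed
qed

lemma lookup_mult_single_delta:
  fixes p :: "(nat \<Rightarrow>\<^sub>0 nat) \<Rightarrow>\<^sub>0 'b::comm_semiring_1"
  shows "Poly_Mapping.lookup (p * Poly_Mapping.single (Poly_Mapping.single i 1) c) e =
    (if 0 < Poly_Mapping.lookup e i then Poly_Mapping.lookup p (e - Poly_Mapping.single i 1) * c else 0)"
proof -
  let ?m = "Poly_Mapping.single i (1::nat)"
  have "Poly_Mapping.lookup (p * Poly_Mapping.single ?m c) e = (\<Sum>l. Poly_Mapping.lookup p l * (c when e = l + ?m))"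
    unfolding Poly_Mapping.lookup_mult lookup_single
    by (simp only: when_commute[of c] Sum_any_when_equal')
  also have "\<dots> = (\<Sum>l. (Poly_Mapping.lookup p l * c when e = l + ?m))"
    by (simp only: mult_when)
  also have "\<dots> = (if 0 < Poly_Mapping.lookup e i then Poly_Mapping.lookup p (e - ?m) * c else 0)"
  proof (cases "0 < Poly_Mapping.lookup e i")
    case True
    then show ?thesis by (simp only: pm_add_delta_iff[OF True] Sum_any_when_equal if_True)
  next
    case False
    have "e \<noteq> l + ?m" for l
    proof
      assume "e = l + ?m"
      then have "Poly_Mapping.lookup e i = Poly_Mapping.lookup l i + 1"
        by (simp add: lookup_add)
      with False show False by simp
    qed
    then show ?thesis using False by simp
  qed
  finally show ?thesis .
qed

lemma of_nat_vec_mult: "(of_nat m * (v :: 'a::field ^ 'k)) = (of_nat m :: 'a) *s v"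
  by (simp add: vec_eq_iff of_nat_index)

lemma smult_vec_mult: "((c::'a::field) *s x) * (w :: 'a ^ 'k) = c *s (x * w)"
  by (simp add: vec_eq_iff)


definition deg :: "nat \<Rightarrow> (nat \<Rightarrow>\<^sub>0 nat) \<Rightarrow> nat" where
  "deg n e = (\<Sum>i<n. Poly_Mapping.lookup e i)"

definition apow :: "(nat \<Rightarrow> 'b::comm_ring_1) \<Rightarrow> nat \<Rightarrow> (nat \<Rightarrow>\<^sub>0 nat) \<Rightarrow> 'b" where
  "apow a n e = (\<Prod>i<n. a i ^ Poly_Mapping.lookup e i)"

fun M :: "nat \<Rightarrow> nat \<Rightarrow> (nat \<Rightarrow>\<^sub>0 nat) \<Rightarrow> nat" where
  "M n 0 e = (if e = 0 then 1 else 0)"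
| "M n (Suc d) e = M n d e + (\<Sum>i<n. if 0 < Poly_Mapping.lookup e i then M n d (e - Poly_Mapping.single i 1) else 0)"

lemma lookup_minus_delta: "Poly_Mapping.lookup (e - Poly_Mapping.single i (1::nat)) j =
   (if j = i then Poly_Mapping.lookup e j - 1 else Poly_Mapping.lookup e j)"
  by (simp add: lookup_minus lookup_single when_def)

lemma helper_ac: "x * a = y \<Longrightarrow> x * r * a = y * (r::'b::comm_ring_1)"
  by (metis mult.commute mult.assoc)

lemma apow_delta:
  assumes "i < n" "0 < Poly_Mapping.lookup e i"
  shows "apow a n (e - Poly_Mapping.single i 1) * a i = apow a n e"
proof -
  have fin: "finite {..<n}" by simp
  have i: "i \<in> {..<n}" using assms by simp
  have eq: "(\<Prod>j\<in>{..<n}-{i}. a j ^ Poly_Mapping.lookup (e - Poly_Mapping.single i 1) j)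
          = (\<Prod>j\<in>{..<n}-{i}. a j ^ Poly_Mapping.lookup e j)"
    by (rule prod.cong) (auto simp: lookup_minus lookup_single when_def)
  have p: "a i ^ (Poly_Mapping.lookup e i - 1) * a i = a i ^ Poly_Mapping.lookup e i"
    using assms(2) by (metis Suc_diff_1 power_Suc2)
  show ?thesis
    unfolding apow_def prod.remove[OF fin i, of "\<lambda>j. a j ^ Poly_Mapping.lookup e j"]
      prod.remove[OF fin i, of "\<lambda>j. a j ^ Poly_Mapping.lookup (e - Poly_Mapping.single i 1) j"] eq
    using p by (simp add: lookup_minus lookup_single when_def flip: mult.assoc)
      (erule helper_ac)
qed

lemma apow_zero: "apow a n 0 = 1"
  by (simp add: apow_def)

lemma coef:
  fixes a :: "nat \<Rightarrow> 'b::comm_ring_1"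
  shows "Poly_Mapping.lookup ((1 + (\<Sum>i<n. Poly_Mapping.single (Poly_Mapping.single i 1) (a i))) ^ d) e
     = of_nat (M n d e) * apow a n e"
proof (induction d arbitrary: e)
  case 0
  then show ?case by (simp add: lookup_one apow_zero when_def)
next
  case (Suc d)
  let ?P = "(1 + (\<Sum>i<n. Poly_Mapping.single (Poly_Mapping.single i 1) (a i)))"
  have "?P ^ Suc d = ?P ^ d + (\<Sum>i<n. ?P ^ d * Poly_Mapping.single (Poly_Mapping.single i 1) (a i))"
    by (simp only: power_Suc2 distrib_left sum_distrib_left mult_1_right)
  have "Poly_Mapping.lookup (?P ^ Suc d) e = of_nat (M n d e) * apow a n e +
     (\<Sum>i<n. if 0 < Poly_Mapping.lookup e i then of_nat (M n d (e - Poly_Mapping.single i 1)) * apow a n (e - Poly_Mapping.single i 1) * a i else 0)"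
    unfolding \<open>?P ^ Suc d = _\<close> lookup_add lookup_sum lookup_mult_single_delta Suc.IH
    by (simp add: if_distrib mult.assoc cong: if_cong)
  also have "\<dots> = of_nat (M n d e) * apow a n e +
     (\<Sum>i<n. (if 0 < Poly_Mapping.lookup e i then of_nat (M n d (e - Poly_Mapping.single i 1)) else 0) * apow a n e)"
  proof (rule arg_cong[where f="\<lambda>x. _ + x"], rule sum.cong)
    fix x assume "x \<in> {..<n}"
    then show "(if 0 < Poly_Mapping.lookup e x then of_nat (M n d (e - Poly_Mapping.single x 1)) * apow a n (e - Poly_Mapping.single x 1) * a x else 0) =
      (if 0 < Poly_Mapping.lookup e x then of_nat (M n d (e - Poly_Mapping.single x 1)) else 0) * apow a n e"
      using apow_delta[of x n e a] by (auto simp: mult.assoc)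
  qed simp
  also have "\<dots> = of_nat (M n (Suc d) e) * apow a n e"
    by (simp add: distrib_right sum_distrib_right of_nat_sum if_distrib cong: if_cong)
  finally show ?case .
qed

lemma span_mult_right:
  fixes w :: "'a::field ^ 'k"
  assumes "x \<in> vec.span X"
  shows "x * w \<in> vec.span ((\<lambda>v. v * w) ` X)"
proof -
  have "subspace_ok": "vec.subspace {x. x * w \<in> vec.span ((\<lambda>v. v * w) ` X)}"
  proof (rule vec.subspaceI)
    show "0 \<in> {x. x * w \<in> vec.span ((\<lambda>v. v * w) ` X)}" by (simp add: vec.span_zero)
  next
    fix x y assume "x \<in> {x. x * w \<in> vec.span ((\<lambda>v. v * w) ` X)}" "y \<in> {x. x * w \<in> vec.span ((\<lambda>v. v * w) ` X)}"
    then show "x + y \<in> {x. x * w \<in> vec.span ((\<lambda>v. v * w) ` X)}"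
      by (simp add: distrib_right vec.span_add)
  next
    fix c x assume "x \<in> {x. x * w \<in> vec.span ((\<lambda>v. v * w) ` X)}"
    moreover have "(c *s x) * w = c *s (x * w)" by (simp add: vec_eq_iff)
    ultimately show "c *s x \<in> {x. x * w \<in> vec.span ((\<lambda>v. v * w) ` X)}"
      by (simp add: vec.span_scale)
  qed
  from vec.span_induct[OF assms subspace_ok] show ?thesis
    by (auto intro: vec.span_base)
qed

lemma exists_max:
  assumes "finite A" "A \<noteq> {}"
    and trans: "\<And>x y z. lt x y \<Longrightarrow> lt y z \<Longrightarrow> lt x z"
    and total: "\<And>x y. x \<noteq> y \<Longrightarrow> lt x y \<or> lt y x"
  shows "\<exists>m\<in>A. \<forall>y\<in>A. y \<noteq> m \<longrightarrow> lt y m"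
  using assms(1,2)
proof (induction A rule: finite_ne_induct)
  case (singleton x) then show ?case by auto
next
  case (insert x F)
  then obtain m where m: "m \<in> F" "\<forall>y\<in>F. y \<noteq> m \<longrightarrow> lt y m" by auto
  show ?case
  proof (cases "lt m x")
    case True
    have "\<forall>y\<in>insert x F. y \<noteq> x \<longrightarrow> lt y x"
    proof (intro ballI impI)
      fix y assume "y \<in> insert x F" "y \<noteq> x"
      then have "y \<in> F" by simp
      then show "lt y x" using m True trans by (cases "y = m") auto
    qed
    then show ?thesis by blast
  next
    case False
    then have "x \<noteq> m \<longrightarrow> lt x m" using total by blast
    then show ?thesis using m by (intro bexI[of _ m]) auto
  qed
qed

lemma indep_greedy:
  fixes c :: "'m \<Rightarrow> 'a::field ^ 'k"
  assumes "finite S"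
    and trans: "\<And>x y z. lt x y \<Longrightarrow> lt y z \<Longrightarrow> lt x z"
    and total: "\<And>x y. x \<noteq> y \<Longrightarrow> lt x y \<or> lt y x"
    and irr: "\<And>x. \<not> lt x x"
    and nsp: "\<And>e. e \<in> S \<Longrightarrow> c e \<notin> vec.span (c ` {g\<in>S. lt g e})"
  shows "inj_on c S \<and> vec.independent (c ` S)"
  using assms(1) nsp
proof (induction S rule: finite_remove_induct)
  case empty
  then show ?case by (simp add: vec.independent_empty)
next
  case (remove A)
  have "\<exists>m\<in>A. \<forall>y\<in>A. y \<noteq> m \<longrightarrow> lt y m"
    by (rule exists_max[OF remove(1,2)], erule (1) trans, erule total)
  then obtain m where m: "m \<in> A" "\<forall>y\<in>A. y \<noteq> m \<longrightarrow> lt y m" by blast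
  have sub: "A - {m} \<subseteq> {g\<in>A. lt g m}" using m by auto
  have IH: "inj_on c (A - {m}) \<and> vec.independent (c ` (A - {m}))"
  proof (rule remove(4)[OF m(1)])
    fix e assume e: "e \<in> A - {m}"
    have "vec.span (c ` {g \<in> A - {m}. lt g e}) \<subseteq> vec.span (c ` {g\<in>A. lt g e})"
      by (intro vec.span_mono image_mono) auto
    then show "c e \<notin> vec.span (c ` {g \<in> A - {m}. lt g e})" using remove(5)[of e] e by auto
  qed
  have nm: "c m \<notin> vec.span (c ` (A - {m}))"
    using remove(5)[OF m(1)] vec.span_mono[OF image_mono[OF sub]] by blast
  have nm': "c m \<notin> c ` (A - {m})"
  proof
    assume "c m \<in> c ` (A - {m})"
    then have "c m \<in> vec.span (c ` (A - {m}))" by (rule vec.span_base)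
    with nm show False by contradiction
  qed
  define A0 where "A0 = A - {m}"
  have A: "A = insert m A0" using m unfolding A0_def by auto
  have "m \<notin> A0" unfolding A0_def by simp
  have "inj_on c (insert m A0) \<and> vec.independent (c ` insert m A0)"
    using IH nm nm' \<open>m \<notin> A0\<close> unfolding A0_def[symmetric] by (simp add: vec.independent_insert)
  then show ?case unfolding A[symmetric] .
qed

lemma span_greedy:
  fixes c :: "'m \<Rightarrow> 'a::field ^ 'k"
  assumes "finite B"
    and trans: "\<And>x y z. lt x y \<Longrightarrow> lt y z \<Longrightarrow> lt x z"
    and irr: "\<And>x. \<not> lt x x"
  defines "S \<equiv> {e\<in>B. c e \<notin> vec.span (c ` {g\<in>B. lt g e})}"
  shows "\<forall>e\<in>B. c e \<in> vec.span (c ` S)"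
proof -
  let ?R = "{(g,e). g \<in> B \<and> e \<in> B \<and> lt g e}"
  have fin: "finite ?R" by (rule finite_subset[of _ "B \<times> B"]) (auto simp: assms(1))
  have tr: "(x, y) \<in> ?R\<^sup>+ \<Longrightarrow> lt x y" for x y
    by (induction rule: trancl_induct) (auto intro: trans)
  have "acyclic ?R" unfolding acyclic_def using tr irr by blast
  then have wf: "wf ?R" using finite_acyclic_wf fin by blast
  have "e \<in> B \<longrightarrow> c e \<in> vec.span (c ` S)" for e
  proof (induction e rule: wf_induct_rule[OF wf])
    case (1 e)
    show ?case
    proof
      assume e: "e \<in> B"
      show "c e \<in> vec.span (c ` S)"
      proof (cases "e \<in> S")
        case True then show ?thesis by (auto intro: vec.span_base)
      next
        case False
        then have "c e \<in> vec.span (c ` {g\<in>B. lt g e})" using e unfolding S_def by auto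
        moreover have "c ` {g\<in>B. lt g e} \<subseteq> vec.span (c ` S)" using 1 e by auto
        then have "vec.span (c ` {g\<in>B. lt g e}) \<subseteq> vec.span (c ` S)"
          by (intro vec.span_minimal vec.subspace_span)
        ultimately show ?thesis by blast
      qed
    qed
  qed
  then show ?thesis by blast
qed


definition inB :: "nat \<Rightarrow> nat \<Rightarrow> (nat \<Rightarrow>\<^sub>0 nat) \<Rightarrow> bool" where
  "inB n d e \<longleftrightarrow> deg n e \<le> d \<and> (\<forall>i. n \<le> i \<longrightarrow> Poly_Mapping.lookup e i = 0)"

lemma deg_add: "deg n (x + y) = deg n x + deg n y"
  by (simp add: deg_def lookup_add sum.distrib)

lemma deg_delta: "i < n \<Longrightarrow> deg n (Poly_Mapping.single i 1) = 1"
  unfolding deg_def lookup_single by (simp add: when_def)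

lemma sum_pos_nat:
  fixes f :: "nat \<Rightarrow> nat" and n :: nat
  shows "0 < (\<Sum>i<n. f i) \<longleftrightarrow> (\<exists>i<n. 0 < f i)"
  by (induct n) (auto simp: less_Suc_eq)

lemma deg_minus_delta:
  assumes "i < n" "0 < Poly_Mapping.lookup e i"
  shows "deg n e = deg n (e - Poly_Mapping.single i 1) + 1"
proof -
  have "e = (e - Poly_Mapping.single i 1) + Poly_Mapping.single i 1"
    using pm_add_delta_iff[OF assms(2)] by blast
  then have "deg n e = deg n ((e - Poly_Mapping.single i 1) + Poly_Mapping.single i 1)" by simp
  also have "\<dots> = deg n (e - Poly_Mapping.single i 1) + 1" by (simp only: deg_add deg_delta[OF assms(1)])
  finally show ?thesis .
qed

lemma M_pos: "0 < M n d e \<longleftrightarrow> inB n d e"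
proof (induction d arbitrary: e)
  case 0
  have "inB n 0 e \<longleftrightarrow> e = 0"
  proof
    assume h: "inB n 0 e"
    then have "\<forall>i\<in>{..<n}. Poly_Mapping.lookup e i = 0"
      unfolding inB_def deg_def by simp
    with h show "e = 0" unfolding inB_def
      by (intro poly_mapping_eqI) (metis lessThan_iff lookup_zero not_le)
  qed (simp add: inB_def deg_def)
  then show ?case by simp
next
  case (Suc d)
  have "0 < M n (Suc d) e \<longleftrightarrow> 0 < M n d e \<or> (\<exists>i<n. 0 < Poly_Mapping.lookup e i \<and> 0 < M n d (e - Poly_Mapping.single i 1))"
    unfolding M.simps(2) add_gr_0 sum_pos_nat by (auto split: if_splits)
  also have "\<dots> \<longleftrightarrow> inB n d e \<or> (\<exists>i<n. 0 < Poly_Mapping.lookup e i \<and> inB n d (e - Poly_Mapping.single i 1))"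
    using Suc.IH by simp
  also have "\<dots> \<longleftrightarrow> inB n (Suc d) e"
  proof
    assume "inB n d e \<or> (\<exists>i<n. 0 < Poly_Mapping.lookup e i \<and> inB n d (e - Poly_Mapping.single i 1))"
    then show "inB n (Suc d) e"
    proof
      assume "inB n d e" then show ?thesis unfolding inB_def by auto
    next
      assume "\<exists>i<n. 0 < Poly_Mapping.lookup e i \<and> inB n d (e - Poly_Mapping.single i 1)"
      then obtain i where i: "i < n" "0 < Poly_Mapping.lookup e i" "inB n d (e - Poly_Mapping.single i 1)" by blast
      have "deg n e \<le> Suc d" using deg_minus_delta[OF i(1,2)] i(3) unfolding inB_def by simp
      moreover have "\<forall>j. n \<le> j \<longrightarrow> Poly_Mapping.lookup e j = 0"
      proof (intro allI impI)
        fix j assume "n \<le> j"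
        then have "Poly_Mapping.lookup (e - Poly_Mapping.single i 1) j = 0" using i(3) unfolding inB_def by blast
        moreover have "Poly_Mapping.lookup (e - Poly_Mapping.single i 1) j = Poly_Mapping.lookup e j"
          using \<open>n \<le> j\<close> i(1) by (simp add: lookup_minus lookup_single when_def)
        ultimately show "Poly_Mapping.lookup e j = 0" by simp
      qed
      ultimately show ?thesis unfolding inB_def by simp
    qed
  next
    assume h: "inB n (Suc d) e"
    show "inB n d e \<or> (\<exists>i<n. 0 < Poly_Mapping.lookup e i \<and> inB n d (e - Poly_Mapping.single i 1))"
    proof (cases "deg n e \<le> d")
      case True then show ?thesis using h unfolding inB_def by auto
    next
      case False
      then have "deg n e \<noteq> 0" by simp
      then obtain i where i: "i < n" "0 < Poly_Mapping.lookup e i"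
        unfolding deg_def by (metis lessThan_iff neq0_conv sum.neutral)
      have "deg n (e - Poly_Mapping.single i 1) \<le> d"
        using deg_minus_delta[OF i] h unfolding inB_def by simp
      moreover have "\<forall>j. n \<le> j \<longrightarrow> Poly_Mapping.lookup (e - Poly_Mapping.single i 1) j = 0"
        using h i(1) unfolding inB_def by (simp add: lookup_minus lookup_single when_def)
      ultimately show ?thesis using i unfolding inB_def by blast
    qed
  qed
  finally show ?case .
qed


theorem lemmaD1:
  fixes a :: "nat \<Rightarrow> ('a::field_char_0) ^ 'k::finite" and n d :: nat
  shows "has_cone_closed_basis ((1 + (\<Sum>i<n. var_term i (a i))) ^ d :: ('a, 'k) vpoly)"
proof -
  define D where "D = ((1 + (\<Sum>i<n. var_term i (a i))) ^ d :: ('a, 'k) vpoly)"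
  define c where "c = Poly_Mapping.lookup D"
  define m where "m e = (of_nat (M n d e) :: 'a)" for e
  define p where "p = apow a n"
  have c_eq: "c e = m e *s p e" for e
    unfolding c_def D_def m_def p_def var_term_def coef of_nat_vec_mult ..
  define B where "B = {e. inB n d e}"
  have mB: "m e \<noteq> 0" if "e \<in> B" for e
    using that M_pos[of n d e] unfolding B_def m_def by simp
  have c0: "c e = 0" if "e \<notin> B" for e
    using that M_pos[of n d e] unfolding B_def c_eq m_def by simp
  have finB: "finite B"
  proof -
    have h1: "Poly_Mapping.lookup e x \<le> d" if "e \<in> B" "x < n" for e x
    proof -
      have "Poly_Mapping.lookup e x \<le> deg n e" unfolding deg_def using that(2)
        by (intro member_le_sum) auto
      then show ?thesis using that(1) unfolding B_def inB_def by simp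
    qed
    have h2: "Poly_Mapping.lookup e x = 0" if "e \<in> B" "\<not> x < n" for e x
      using that unfolding B_def inB_def by simp
    have "Poly_Mapping.lookup ` B \<subseteq> {f. \<forall>x. (x \<in> {..<n} \<longrightarrow> f x \<in> {..d}) \<and> (x \<notin> {..<n} \<longrightarrow> f x = 0)}"
      using h1 h2 by auto
    moreover have "finite {f. \<forall>x. (x \<in> {..<n} \<longrightarrow> f x \<in> {..d}) \<and> (x \<notin> {..<n} \<longrightarrow> (f x::nat) = 0)}"
      by (rule finite_set_of_finite_funs) auto
    ultimately have "finite (Poly_Mapping.lookup ` B)" by (rule finite_subset)
    moreover have "inj_on Poly_Mapping.lookup B" by (rule inj_onI, rule poly_mapping_eqI) simp
    ultimately show ?thesis by (rule finite_imageD)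
  qed
  define lt where "lt g e \<longleftrightarrow> deg n g < deg n e \<or> (deg n g = deg n e \<and> g < e)" for g e :: "nat \<Rightarrow>\<^sub>0 nat"
  have trans: "lt x z" if "lt x y" "lt y z" for x y z using that unfolding lt_def by auto
  have total: "lt x y \<or> lt y x" if "x \<noteq> y" for x y using that unfolding lt_def by auto
  have irr: "\<not> lt x x" for x unfolding lt_def by simp
  have ltadd: "lt (g + f) (e + f)" if "lt g e" for g e f
    using that unfolding lt_def deg_add by (auto intro: add_strict_right_mono)
  define S where "S = {e\<in>B. c e \<notin> vec.span (c ` {g\<in>B. lt g e})}"
  have spanB: "\<forall>e\<in>B. c e \<in> vec.span (c ` S)"
    unfolding S_def by (rule span_greedy[OF finB]) (erule (1) trans, rule irr)
  have finS: "finite S" using finB unfolding S_def by simp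
  have nspS: "c e \<notin> vec.span (c ` {g\<in>S. lt g e})" if "e \<in> S" for e
  proof
    assume "c e \<in> vec.span (c ` {g\<in>S. lt g e})"
    moreover have "vec.span (c ` {g\<in>S. lt g e}) \<subseteq> vec.span (c ` {g\<in>B. lt g e})"
      by (intro vec.span_mono image_mono) (auto simp: S_def)
    ultimately show False using that unfolding S_def by blast
  qed
  have ind: "inj_on c S \<and> vec.independent (c ` S)"
    by (rule indep_greedy[OF finS]) (erule (1) trans, erule total, rule irr, erule nspS)
  have rng: "range c \<subseteq> vec.span (c ` S)"
  proof
    fix v assume "v \<in> range c"
    then obtain e where v: "v = c e" by blast
    show "v \<in> vec.span (c ` S)"
    proof (cases "e \<in> B")
      case True then show ?thesis using spanB v by blast
    next
      case False then show ?thesis using c0 v vec.span_zero by simp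
    qed
  qed
  have speq: "vec.span (c ` S) = lrsp D"
  proof
    show "vec.span (c ` S) \<subseteq> lrsp D" unfolding lrsp_def c_def[symmetric] by (rule vec.span_mono) auto
    show "lrsp D \<subseteq> vec.span (c ` S)" unfolding lrsp_def c_def[symmetric]
      by (rule vec.span_minimal[OF rng vec.subspace_span])
  qed
  have apow_add: "p (x + y) = p x * p y" for x y
    unfolding p_def apow_def by (simp add: lookup_add power_add prod.distrib)
  have p_eq: "p e = inverse (m e) *s c e" if "e \<in> B" for e
    using mB[OF that] unfolding c_eq by (simp add: vec.scale_scale)
  have cone: "cone_closed S"
    unfolding cone_closed_def
  proof (intro ballI allI impI)
    fix e e' assume eS: "e \<in> S" and le: "\<forall>i. Poly_Mapping.lookup e' i \<le> Poly_Mapping.lookup e i"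
    have eB: "e \<in> B" using eS unfolding S_def by simp
    define f where "f = e - e'"
    have ef: "e = e' + f" unfolding f_def using le by (intro poly_mapping_eqI) (simp add: lookup_add lookup_minus)
    have degs: "deg n e = deg n e' + deg n f" using deg_add[of n e' f] ef by simp
    have fz: "Poly_Mapping.lookup f i = 0" if "n \<le> i" for i
      using eB that unfolding f_def B_def inB_def by (simp add: lookup_minus)
    have e'B: "e' \<in> B"
    proof -
      have "\<forall>i. n \<le> i \<longrightarrow> Poly_Mapping.lookup e' i = 0"
      proof (intro allI impI)
        fix i assume "n \<le> i"
        then have "Poly_Mapping.lookup e i = 0" using eB unfolding B_def inB_def by simp
        then show "Poly_Mapping.lookup e' i = 0" using le[rule_format, of i] by simp
      qed
      then show ?thesis using eB degs unfolding B_def inB_def by simp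
    qed
    show "e' \<in> S"
    proof (rule ccontr)
      assume "e' \<notin> S"
      then have sp: "c e' \<in> vec.span (c ` {g\<in>B. lt g e'})" using e'B unfolding S_def by simp
      have "p e' \<in> vec.span (c ` {g\<in>B. lt g e'})"
        using vec.span_scale[OF sp, of "inverse (m e')"] p_eq[OF e'B] by simp
      then have "p e' * p f \<in> vec.span ((\<lambda>v. v * p f) ` c ` {g\<in>B. lt g e'})"
        by (rule span_mult_right)
      moreover have "(\<lambda>v. v * p f) ` c ` {g\<in>B. lt g e'} \<subseteq> vec.span (c ` {g\<in>B. lt g e})"
      proof
        fix v assume "v \<in> (\<lambda>v. v * p f) ` c ` {g\<in>B. lt g e'}"
        then obtain g where g: "g \<in> B" "lt g e'" and v: "v = c g * p f" by blast
        have "deg n g \<le> deg n e'" using g(2) unfolding lt_def by auto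
        then have gfB: "g + f \<in> B"
          using g(1) eB degs fz unfolding B_def inB_def by (simp add: deg_add lookup_add)
        have lt': "lt (g + f) e" using ltadd[OF g(2), of f] ef by simp
        have "v = m g *s p (g + f)" unfolding v c_eq apow_add smult_vec_mult by simp
        also have "\<dots> = m g *s (inverse (m (g+f)) *s c (g + f))" using p_eq[OF gfB] by simp
        finally have v': "v = m g *s (inverse (m (g+f)) *s c (g + f))" .
        have "c (g+f) \<in> c ` {g\<in>B. lt g e}" using gfB lt' by blast
        then show "v \<in> vec.span (c ` {g\<in>B. lt g e})"
          unfolding v' by (intro vec.span_scale vec.span_base)
      qed
      then have "vec.span ((\<lambda>v. v * p f) ` c ` {g\<in>B. lt g e'}) \<subseteq> vec.span (c ` {g\<in>B. lt g e})"
        by (rule vec.span_minimal[OF _ vec.subspace_span])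
      ultimately have "p e \<in> vec.span (c ` {g\<in>B. lt g e})"
        using ef apow_add by auto
      then have "c e \<in> vec.span (c ` {g\<in>B. lt g e})"
        unfolding c_eq by (rule vec.span_scale)
      then show False using eS unfolding S_def by simp
    qed
  qed
  show ?thesis unfolding has_cone_closed_basis_def D_def[symmetric] c_def[symmetric]
    using cone ind speq by blast
qed

end
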